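(* Suppose $\gcd(\alpha,|\langle\Theta\rangle|)=1$, and let $\mathcal{C}$ be an $\mathbb{F}_q\mathcal{R}$-skew cyclic code of length $(\alpha,\beta)$ generated as a left $\mathcal{R}[x;\theta]$-submodule of $R_{\alpha,\beta}$ by $(f(x),0)$ and $(0,g(x))$, with $f(x)\in\mathbb{F}_q[x;\Theta]/\langle x^\alpha-1\rangle$ and $g(x)\in\mathcal{R}[x;\theta]/\langle x^\beta-1\rangle$. Then $\mathcal{C}=\mathcal{C}'\otimes\mathscr{C}$, where $\mathcal{C}'$ is a cyclic code of length $\alpha$ over $\mathbb{F}_q$ and $\mathscr{C}$ is a skew cyclic code of length $\beta$ over $\mathcal{R}$.
   Context: Let $p$ be a prime, $q=p^m$, $\mathcal{R}=\mathbb{F}_q[u]/\langle u^2-u\rangle$. Fix $i$; $\Theta(a)=a^{p^i}$ on $\mathbb{F}_q$ and $\theta(a+ub)=a^{p^i}+ub^{p^i}$ on $\mathcal{R}$; $\eta(a+ub)=a$; $|\langle\Theta\rangle|$ denotes the order of $\Theta$. $\mathbb{F}_q[x;\Theta]$, $\mathcal{R}[x;\theta]$ are skew polynomial rings with multiplication determined by $(ax^i)(bx^j)=a\Theta^i(b)x^{i+j}$ (resp. with $\theta$). $R_{\alpha,\beta}=\mathbb{F}_q[x;\Theta]/\langle x^\alpha-1\rangle\times\mathcal{R}[x;\theta]/\langle x^\beta-1\rangle$, identified with $\mathbb{F}_q^\alpha\times\mathcal{R}^\beta$ via coefficient vectors, is a left $\mathcal{R}[x;\theta]$-module via $r(x)*(k(x),t(x))=(\eta(r(x))k(x),r(x)t(x))$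 ($\eta$ coefficientwise, reduction modulo $x^\alpha-1$, $x^\beta-1$). An $\mathbb{F}_q\mathcal{R}$-skew cyclic code of length $(\alpha,\beta)$ is an $\mathcal{R}$-submodule of $\mathbb{F}_q^\alpha\times\mathcal{R}^\beta$ (with $s*(x,y)=(\eta(s)x,sy)$ componentwise) closed under $\sigma(x_0,\dots,x_{\alpha-1},y_0,\dots,y_{\beta-1})=(\Theta(x_{\alpha-1}),\Theta(x_0),\dots,\Theta(x_{\alpha-2}),\theta(y_{\beta-1}),\theta(y_0),\dots,\theta(y_{\beta-2}))$. A skew cyclic code of length $n$ over $\mathcal{R}$ is an $\mathcal{R}$-submodule of $\mathcal{R}^n$ closed under $(c_0,\dots,c_{n-1})\mapsto(\theta(c_{n-1}),\theta(c_0),\dots,\theta(c_{n-2}))$. For $A\subseteq\mathbb{F}_q^\alpha$, $B\subseteq\mathcal{R}^\beta$, $A\otimes B=\{(a,b):a\in A,b\in B\}$. *)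

theory Defs
  imports Main "HOL-Library.Product_Plus" "HOL-Computational_Algebra.Primes"
begin

(* Elements of R = F_q[u]/<u^2-u> are pairs (a,b) standing for a + u b;
   addition is componentwise (Product_Plus), multiplication below. *)

definition Rmul :: "'a::comm_ring \<times> 'a \<Rightarrow> 'a \<times> 'a \<Rightarrow> 'a \<times> 'a" where
  "Rmul x y = (fst x * fst y, fst x * snd y + snd x * fst y + snd x * snd y)"

definition Theta :: "nat \<Rightarrow> nat \<Rightarrow> 'a::field \<Rightarrow> 'a" where
  "Theta p i a = a ^ (p ^ i)"

definition thetaR :: "nat \<Rightarrow> nat \<Rightarrow> 'a::field \<times> 'a \<Rightarrow> 'a \<times> 'a" where
  "thetaR p i x = (Theta p i (fst x), Theta p i (snd x))"

definition eta :: "'a \<times> 'a \<Rightarrow> 'a" where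
  "eta x = fst x"

definition Theta_ord :: "'a::field itself \<Rightarrow> nat \<Rightarrow> nat \<Rightarrow> nat" where
  "Theta_ord T p i = (LEAST k. 0 < k \<and> (\<forall>a::'a. (Theta p i ^^ k) a = a))"

(* Vectors = coefficient lists. Componentwise addition of vectors. *)
definition vadd :: "'b::plus list \<Rightarrow> 'b list \<Rightarrow> 'b list" where
  "vadd xs ys = map2 (+) xs ys"

(* Action of the skew polynomial r(x) = sum_s r!s x^s in R[x;theta] on
   F_q[x;Theta]/<x^alpha - 1>:  eta(r(x)) k(x)  reduced mod x^alpha - 1,
   using (a x^s)(b x^j) = a Theta^s(b) x^(s+j) and x^n = 1. *)
definition act1 :: "nat \<Rightarrow> nat \<Rightarrow> ('a::field \<times> 'a) list \<Rightarrow> 'a list \<Rightarrow> 'a list" where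
  "act1 p i r k = map (\<lambda>l. \<Sum>s<length r. \<Sum>j<length k.
       if (s + j) mod length k = l then eta (r ! s) * (Theta p i ^^ s) (k ! j) else 0)
     [0..<length k]"

(* Action of r(x) in R[x;theta] on R[x;theta]/<x^beta - 1> by left multiplication. *)
definition act2 :: "nat \<Rightarrow> nat \<Rightarrow> ('a::field \<times> 'a) list \<Rightarrow> ('a \<times> 'a) list \<Rightarrow> ('a \<times> 'a) list" where
  "act2 p i r t = map (\<lambda>l. \<Sum>s<length r. \<Sum>j<length t.
       if (s + j) mod length t = l then Rmul (r ! s) ((thetaR p i ^^ s) (t ! j)) else 0)
     [0..<length t]"

definition mod_act :: "nat \<Rightarrow> nat \<Rightarrow> ('a::field \<times> 'a) list \<Rightarrow> 'a list \<times> ('a \<times> 'a) list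
    \<Rightarrow> 'a list \<times> ('a \<times> 'a) list" where
  "mod_act p i r v = (act1 p i r (fst v), act2 p i r (snd v))"

definition padd :: "'a::field list \<times> ('a \<times> 'a) list \<Rightarrow> 'a list \<times> ('a \<times> 'a) list
    \<Rightarrow> 'a list \<times> ('a \<times> 'a) list" where
  "padd v w = (vadd (fst v) (fst w), vadd (snd v) (snd w))"

definition gen_code :: "nat \<Rightarrow> nat \<Rightarrow> nat \<Rightarrow> nat \<Rightarrow> 'a::field list \<Rightarrow> ('a \<times> 'a) list
    \<Rightarrow> ('a list \<times> ('a \<times> 'a) list) set" where
  "gen_code p i \<alpha> \<beta> f g =
     {padd (mod_act p i r1 (f, replicate \<beta> 0)) (mod_act p i r2 (replicate \<alpha> 0, g)) | r1 r2. True}"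

definition cshift :: "'b list \<Rightarrow> 'b list" where
  "cshift xs = (if xs = [] then [] else last xs # butlast xs)"

definition cyclic_code :: "nat \<Rightarrow> 'a::field list set \<Rightarrow> bool" where
  "cyclic_code n D \<longleftrightarrow>
     D \<subseteq> {xs. length xs = n} \<and> replicate n 0 \<in> D \<and>
     (\<forall>x\<in>D. \<forall>y\<in>D. vadd x y \<in> D) \<and>
     (\<forall>c. \<forall>x\<in>D. map (\<lambda>a. c * a) x \<in> D) \<and>
     (\<forall>x\<in>D. cshift x \<in> D)"

definition skew_cyclic_code_R :: "nat \<Rightarrow> nat \<Rightarrow> nat \<Rightarrow> ('a::field \<times> 'a) list set \<Rightarrow> bool" where
  "skew_cyclic_code_R p i n D \<longleftrightarrow>
     D \<subseteq> {xs. length xs = n} \<and> replicate n 0 \<in> D \<and>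
     (\<forall>x\<in>D. \<forall>y\<in>D. vadd x y \<in> D) \<and>
     (\<forall>c. \<forall>x\<in>D. map (Rmul c) x \<in> D) \<and>
     (\<forall>x\<in>D. map (thetaR p i) (cshift x) \<in> D)"

end

theory Submission
  imports Defs "HOL-Number_Theory.Residues"
begin

lemma sum_split_add:
  "(\<Sum>t<s+n. F t) = (\<Sum>t<s. F t) + (\<Sum>u<n. F (s+u))" for F :: "nat \<Rightarrow> 'b::comm_monoid_add"
  by (induction n) (simp_all add: add.assoc)

lemma char_eq:
  assumes "prime p" "card (UNIV :: 'a::{field,finite} set) = p ^ m"
  shows "CHAR('a) = p"
proof -
  have pc: "prime CHAR('a)"
    using prime_CHAR_semidom[where ?'a='a] finite_imp_CHAR_pos[where ?'a='a] by auto
  have "CHAR('a) dvd p ^ m" using CHAR_dvd_CARD[where ?'a='a] assms(2) by simp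
  hence "CHAR('a) dvd p" using pc prime_dvd_power by blast
  thus ?thesis using pc assms(1) primes_dvd_imp_eq by blast
qed

lemma power_card_same:
  fixes x :: "'a :: {field,finite}"
  shows "x ^ card (UNIV :: 'a set) = x"
proof (cases "x = 0")
  case False
  have "x * (\<Prod>y\<in>UNIV-{0}. x * y) = x * x ^ (card (UNIV :: 'a set) - 1) * \<Prod>(UNIV-{0})"
    by (simp add: prod.distrib mult_ac)
  also have "x * x ^ (card (UNIV :: 'a set) - 1) = x ^ Suc (card (UNIV :: 'a set) - 1)"
    by (subst power_Suc) auto
  also have "Suc (card (UNIV :: 'a set) - 1) = card (UNIV :: 'a set)"
    using finite_UNIV_card_ge_0[where ?'a = 'a] by simp
  also have "(\<Prod>y\<in>UNIV-{0}. x * y) = (\<Prod>y\<in>UNIV-{0}. y)"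
    by (rule prod.reindex_bij_witness[of _ "\<lambda>y. y / x" "\<lambda>y. x * y"]) (use False in auto)
  finally show ?thesis
    by simp
qed (use finite_UNIV_card_ge_0[where ?'a = 'a] in auto)

lemma Theta_funpow: "(Theta p i ^^ k) a = a ^ ((p ^ i) ^ k)"
  by (induction k) (simp_all add: Theta_def power_mult[symmetric] mult.commute)

lemma Theta_add:
  assumes "CHAR('a::{field,finite}) = p" "prime p"
  shows "Theta p i (a + b :: 'a) = Theta p i a + Theta p i b"
  unfolding Theta_def using assms by (intro freshmans_dream') auto

lemma Theta_mult: "Theta p i (a * b) = Theta p i a * Theta p i b"
  by (simp add: Theta_def power_mult_distrib)

lemma Theta_zero: "prime p \<Longrightarrow> Theta p i 0 = 0"
  by (simp add: Theta_def prime_gt_0_nat)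

lemma Theta_pow_zero: "prime p \<Longrightarrow> (Theta p i ^^ s) 0 = 0"
  by (induction s) (simp_all add: Theta_zero)

lemma thetaR_pow_zero: "prime p \<Longrightarrow> (thetaR p i ^^ s) 0 = 0"
  by (induction s) (simp_all add: thetaR_def Theta_zero zero_prod_def)

lemma Rmul_zero_right[simp]: "Rmul x 0 = 0" and Rmul_zero_left[simp]: "Rmul 0 x = 0"
  by (simp_all add: Rmul_def zero_prod_def)

lemma Rmul_add_left: "Rmul (a + b) x = Rmul a x + Rmul b x"
  by (simp add: Rmul_def algebra_simps)

lemma Rmul_add_right: "Rmul x (a + b) = Rmul x a + Rmul x b"
  by (simp add: Rmul_def algebra_simps)

lemma Rmul_assoc: "Rmul c (Rmul a b) = Rmul (Rmul c a) b"
  by (simp add: Rmul_def algebra_simps)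

lemma Rmul_sum: "Rmul c (sum F A) = (\<Sum>x\<in>A. Rmul c (F x))"
  by (induction A rule: infinite_finite_induct) (simp_all add: Rmul_add_right)

lemma thetaR_add:
  assumes "CHAR('a::{field,finite}) = p" "prime p"
  shows "thetaR p i (a + b :: 'a \<times> 'a) = thetaR p i a + thetaR p i b"
  using assms by (simp add: thetaR_def Theta_add)

lemma thetaR_sum:
  assumes "CHAR('a::{field,finite}) = p" "prime p"
  shows "thetaR p i (sum (F :: _ \<Rightarrow> 'a \<times> 'a) A) = (\<Sum>x\<in>A. thetaR p i (F x))"
proof (induction A rule: infinite_finite_induct)
  case (insert x F)
  then show ?case using assms by (simp add: thetaR_add)
qed (use assms in \<open>simp_all add: thetaR_def Theta_zero zero_prod_def\<close>)

lemma thetaR_Rmul: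
  assumes "CHAR('a::{field,finite}) = p" "prime p"
  shows "thetaR p i (Rmul a (b :: 'a \<times> 'a)) = Rmul (thetaR p i a) (thetaR p i b)"
  using assms by (simp add: thetaR_def Rmul_def Theta_add Theta_mult)


definition nthd :: "'b::zero list \<Rightarrow> nat \<Rightarrow> 'b" where
  "nthd r s = (if s < length r then r ! s else 0)"

lemma length_act1[simp]: "length (act1 p i r k) = length k"
  by (simp add: act1_def)

lemma length_act2[simp]: "length (act2 p i r k) = length k"
  by (simp add: act2_def)

lemma act1_zero_vec: "prime p \<Longrightarrow> act1 p i r (replicate n 0) = replicate n 0"
  by (auto simp: act1_def Theta_pow_zero intro!: nth_equalityI sum.neutral)

lemma act2_zero_vec: "prime p \<Longrightarrow> act2 p i r (replicate n 0) = replicate n 0"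
  by (auto simp: act2_def thetaR_pow_zero intro!: nth_equalityI sum.neutral)

lemma act1_nil: "act1 p i [] k = replicate (length k) 0"
  by (auto simp: act1_def intro!: nth_equalityI)

lemma act2_nil: "act2 p i [] k = replicate (length k) 0"
  by (auto simp: act2_def intro!: nth_equalityI)

lemma act1_ext:
  assumes "length r \<le> N"
  shows "act1 p i r k = map (\<lambda>l. \<Sum>s<N. \<Sum>j<length k.
       if (s + j) mod length k = l then eta (nthd r s) * (Theta p i ^^ s) (k ! j) else 0)
     [0..<length k]"
  unfolding act1_def
proof (intro map_cong refl sum.mono_neutral_cong_left)
  show "{..<length r} \<subseteq> {..<N}" using assms by auto
qed (auto simp: nthd_def eta_def intro!: sum.neutral)

lemma act2_ext:
  assumes "length r \<le> N"
  shows "act2 p i r k = map (\<lambda>l. \<Sum>s<N. \<Sum>j<length k.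
       if (s + j) mod length k = l then Rmul (nthd r s) ((thetaR p i ^^ s) (k ! j)) else 0)
     [0..<length k]"
  unfolding act2_def
proof (intro map_cong refl sum.mono_neutral_cong_left)
  show "{..<length r} \<subseteq> {..<N}" using assms by auto
qed (auto simp: nthd_def intro!: sum.neutral)

lemma act1_add: "\<exists>r. vadd (act1 p i r1 k) (act1 p i r2 k) = act1 p i r k"
proof -
  define N where "N = max (length r1) (length r2)"
  define r where "r = map (\<lambda>s. nthd r1 s + nthd r2 s) [0..<N]"
  have n: "nthd r s = nthd r1 s + nthd r2 s" if "s < N" for s
    using that by (simp add: r_def nthd_def)
  have "vadd (act1 p i r1 k) (act1 p i r2 k) = act1 p i r k"
    unfolding vadd_def
    apply (subst act1_ext[of r1 N], simp add: N_def)
    apply (subst act1_ext[of r2 N], simp add: N_def)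
    apply (subst act1_ext[of r N], simp add: r_def)
    apply (rule nth_equalityI)
     apply simp
    apply (simp add: sum.distrib[symmetric])
    apply (intro sum.cong refl)
    apply (simp add: n eta_def algebra_simps)
    done
  thus ?thesis by blast
qed

lemma act2_add: "\<exists>r. vadd (act2 p i r1 k) (act2 p i r2 k) = act2 p i r k"
proof -
  define N where "N = max (length r1) (length r2)"
  define r where "r = map (\<lambda>s. nthd r1 s + nthd r2 s) [0..<N]"
  have n: "nthd r s = nthd r1 s + nthd r2 s" if "s < N" for s
    using that by (simp add: r_def nthd_def)
  have "vadd (act2 p i r1 k) (act2 p i r2 k) = act2 p i r k"
    unfolding vadd_def
    apply (subst act2_ext[of r1 N], simp add: N_def)
    apply (subst act2_ext[of r2 N], simp add: N_def)
    apply (subst act2_ext[of r N], simp add: r_def)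
    apply (rule nth_equalityI)
     apply simp
    apply (simp add: sum.distrib[symmetric])
    apply (intro sum.cong refl)
    apply (simp add: n Rmul_add_left)
    done
  thus ?thesis by blast
qed

lemma act1_smult: "map (\<lambda>a. c * a) (act1 p i r k) = act1 p i (map (\<lambda>x. (c * fst x, snd x)) r) k"
  by (auto simp: act1_def sum_distrib_left eta_def intro!: nth_equalityI sum.cong)

lemma act2_smult: "map (Rmul c) (act2 p i r k) = act2 p i (map (Rmul c) r) k"
  by (auto simp: act2_def Rmul_sum Rmul_assoc intro!: nth_equalityI sum.cong)


lemma mod_shift:
  fixes n :: nat
  assumes "l < n" "s mod n = 1 mod n"
  shows "((s + X) mod n = l) = (X mod n = (l + n - 1) mod n)"
proof -
  have e: "(s + X) mod n = (1 + X) mod n" using assms(2) by (metis mod_add_left_eq)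
  have "((1 + X) mod n = l) = (X mod n = (l + n - 1) mod n)"
  proof
    assume h: "(1 + X) mod n = l"
    have "X mod n = (X + n) mod n" by simp
    also have "X + n = (1 + X) + (n - 1)" using assms(1) by simp
    also have "((1 + X) + (n - 1)) mod n = ((1 + X) mod n + (n - 1)) mod n" by (simp add: mod_add_left_eq)
    also have "\<dots> = (l + n - 1) mod n" using h assms(1) by simp
    finally show "X mod n = (l + n - 1) mod n" .
  next
    assume h: "X mod n = (l + n - 1) mod n"
    have "(1 + X) mod n = (1 + X mod n) mod n" by (simp add: mod_Suc_eq)
    also have "\<dots> = (1 + (l + n - 1)) mod n" using h by (metis mod_Suc_eq plus_1_eq_Suc)
    also have "1 + (l + n - 1) = l + n" using assms(1) by simp
    finally show "(1 + X) mod n = l" using assms(1) by simp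
  qed
  thus ?thesis using e by simp
qed

lemma length_cshift[simp]: "length (cshift xs) = length xs"
  by (simp add: cshift_def)

lemma cshift_nth:
  assumes "l < length xs"
  shows "cshift xs ! l = xs ! ((l + length xs - 1) mod length xs)"
proof (cases "l = 0")
  case True
  then show ?thesis using assms by (simp add: cshift_def last_conv_nth)
next
  case False
  then have e: "l + length xs - 1 = (l - 1) + length xs" by simp
  have m: "(l + length xs - 1) mod length xs = l - 1" unfolding e using assms False
    by (simp only: mod_add_self2) simp
  have "xs \<noteq> []" using assms by auto
  then have "cshift xs ! l = butlast xs ! (l - 1)" using False by (simp add: cshift_def nth_Cons')
  also have "\<dots> = xs ! (l - 1)" using assms False by (simp add: nth_butlast)
  finally show ?thesis using m by simp
qed

lemma act1_shift:
  fixes k :: "'a::field list"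
  assumes "prime p" "(Theta p i ^^ s) = (id :: 'a \<Rightarrow> 'a)" "s mod length k = 1 mod length k"
  shows "cshift (act1 p i r k) = act1 p i (replicate s 0 @ r) k"
proof (rule nth_equalityI)
  show "length (cshift (act1 p i r k)) = length (act1 p i (replicate s 0 @ r) k)" by simp
next
  fix l assume "l < length (cshift (act1 p i r k))"
  hence l: "l < length k" by simp
  have ml: "(l + length k - 1) mod length k < length k" using l by (intro mod_less_divisor) (cases k, auto)
  define F where "F = (\<lambda>t. \<Sum>j<length k.
       if (t + j) mod length k = l then eta (nthd (replicate s 0 @ r) t) * (Theta p i ^^ t) (k ! j) else 0)"
  have "act1 p i (replicate s 0 @ r) k ! l = (\<Sum>t<s + length r. F t)"
    unfolding F_def by (subst act1_ext[of _ "s + length r"]) (simp_all only: l nth_map length_upt nth_upt add_0 diff_zero length_append length_replicate order_refl)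
  also have "\<dots> = (\<Sum>t<s. F t) + (\<Sum>u<length r. F (s + u))" by (rule sum_split_add)
  also have "(\<Sum>t<s. F t) = 0"
  proof (intro sum.neutral ballI)
    fix t assume "t \<in> {..<s}"
    hence z: "nthd (replicate s 0 @ r) t = 0" by (simp add: nthd_def nth_append)
    show "F t = 0" unfolding F_def z by (simp add: eta_def cong: if_cong)
  qed
  also have "(\<Sum>u<length r. F (s + u)) = (\<Sum>u<length r. \<Sum>j<length k.
       if (u + j) mod length k = (l + length k - 1) mod length k
       then eta (r ! u) * (Theta p i ^^ u) (k ! j) else 0)"
  proof (rule sum.cong[OF refl])
    fix u assume u: "u \<in> {..<length r}"
    have th: "(Theta p i ^^ (s + u)) = (Theta p i ^^ u :: 'a \<Rightarrow> 'a)"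
    proof -
      have "(Theta p i ^^ (s + u)) = Theta p i ^^ s \<circ> (Theta p i ^^ u :: 'a \<Rightarrow> 'a)" by (rule funpow_add)
      also have "\<dots> = id \<circ> Theta p i ^^ u" by (simp only: assms(2))
      finally show ?thesis by simp
    qed
    have nd: "nthd (replicate s 0 @ r) (s + u) = r ! u" using u
      by (simp add: nthd_def nth_append)
    show "F (s + u) = (\<Sum>j<length k.
       if (u + j) mod length k = (l + length k - 1) mod length k
       then eta (r ! u) * (Theta p i ^^ u) (k ! j) else 0)"
      unfolding F_def
    proof (rule sum.cong[OF refl])
      fix j assume "j \<in> {..<length k}"
      have c: "((s + u + j) mod length k = l) = ((u + j) mod length k = (l + length k - 1) mod length k)"
        using mod_shift[OF l assms(3), of "u+j"] by (simp only: add.assoc)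
      show "(if (s + u + j) mod length k = l
          then eta (nthd (replicate s 0 @ r) (s + u)) * (Theta p i ^^ (s + u)) (k ! j) else 0) =
          (if (u + j) mod length k = (l + length k - 1) mod length k
          then eta (r ! u) * (Theta p i ^^ u) (k ! j) else 0)"
        by (simp only: c th nd)
    qed
  qed
  also have "0 + \<dots> = act1 p i r k ! ((l + length k - 1) mod length k)"
    using ml unfolding act1_def by (simp only: nth_map length_upt diff_zero nth_upt add_0 add_0_left)
  also have "\<dots> = cshift (act1 p i r k) ! l"
    using cshift_nth[of l "act1 p i r k"] l by (simp only: length_act1)
  finally show "cshift (act1 p i r k) ! l = act1 p i (replicate s 0 @ r) k ! l" by (rule sym)
qed


lemma thetaR_zero: "prime p \<Longrightarrow> thetaR p i 0 = 0"
  by (simp add: thetaR_def Theta_zero zero_prod_def)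

lemma act2_shift:
  fixes g :: "('a::{field,finite} \<times> 'a) list"
  assumes ch: "CHAR('a) = p" and pp: "prime p"
  shows "map (thetaR p i) (cshift (act2 p i r g)) = act2 p i (0 # map (thetaR p i) r) g"
proof (rule nth_equalityI)
  show "length (map (thetaR p i) (cshift (act2 p i r g))) = length (act2 p i (0 # map (thetaR p i) r) g)"
    by simp
next
  fix l assume "l < length (map (thetaR p i) (cshift (act2 p i r g)))"
  hence l: "l < length g" by simp
  have ml: "(l + length g - 1) mod length g < length g" using l by (intro mod_less_divisor) (cases g, auto)
  define G where "G = (\<lambda>t. \<Sum>j<length g.
       if (t + j) mod length g = l then Rmul ((0 # map (thetaR p i) r) ! t) ((thetaR p i ^^ t) (g ! j)) else 0)"
  have "act2 p i (0 # map (thetaR p i) r) g ! l = (\<Sum>t<Suc (length r). G t)"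
    unfolding G_def act2_def using l by (simp only: nth_map length_upt nth_upt add_0 diff_zero length_Cons length_map)
  also have "\<dots> = G 0 + (\<Sum>u<length r. G (Suc u))" by (rule sum.lessThan_Suc_shift)
  also have "G 0 = 0" unfolding G_def by (simp cong: if_cong)
  also have "(\<Sum>u<length r. G (Suc u)) = (\<Sum>u<length r. \<Sum>j<length g.
       thetaR p i (if (u + j) mod length g = (l + length g - 1) mod length g
       then Rmul (r ! u) ((thetaR p i ^^ u) (g ! j)) else 0))"
  proof (rule sum.cong[OF refl])
    fix u assume u: "u \<in> {..<length r}"
    show "G (Suc u) = (\<Sum>j<length g.
       thetaR p i (if (u + j) mod length g = (l + length g - 1) mod length g
       then Rmul (r ! u) ((thetaR p i ^^ u) (g ! j)) else 0))"
      unfolding G_def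
    proof (rule sum.cong[OF refl])
      fix j assume "j \<in> {..<length g}"
      have c: "((Suc u + j) mod length g = l) = ((u + j) mod length g = (l + length g - 1) mod length g)"
        using mod_shift[OF l, of 1 "u+j"] by simp
      have nd: "(0 # map (thetaR p i) r) ! Suc u = thetaR p i (r ! u)" using u by simp
      have fp: "(thetaR p i ^^ Suc u) (g ! j) = thetaR p i ((thetaR p i ^^ u) (g ! j))" by simp
      show "(if (Suc u + j) mod length g = l
          then Rmul ((0 # map (thetaR p i) r) ! Suc u) ((thetaR p i ^^ Suc u) (g ! j)) else 0) =
          thetaR p i (if (u + j) mod length g = (l + length g - 1) mod length g
          then Rmul (r ! u) ((thetaR p i ^^ u) (g ! j)) else 0)"
      proof -
        have z: "thetaR p i (0 :: 'a \<times> 'a) = 0" by (rule thetaR_zero[OF pp])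
        show ?thesis unfolding c nd fp using thetaR_Rmul[OF ch pp] z by simp
      qed
    qed
  qed
  also have "0 + \<dots> = thetaR p i (act2 p i r g ! ((l + length g - 1) mod length g))"
    using ml unfolding act2_def
    by (simp only: nth_map length_upt diff_zero nth_upt add_0 add_0_left thetaR_sum[OF ch pp])
  also have "\<dots> = map (thetaR p i) (cshift (act2 p i r g)) ! l"
    using cshift_nth[of l "act2 p i r g"] l by (simp only: length_act2 nth_map length_cshift)
  finally show "map (thetaR p i) (cshift (act2 p i r g)) ! l = act2 p i (0 # map (thetaR p i) r) g ! l"
    by (rule sym)
qed


lemma vadd_zero_right: "length (xs :: 'b::monoid_add list) = n \<Longrightarrow> vadd xs (replicate n 0) = xs"
  by (auto simp: vadd_def intro!: nth_equalityI)

lemma vadd_zero_left: "length (xs :: 'b::monoid_add list) = n \<Longrightarrow> vadd (replicate n 0) xs = xs"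
  by (auto simp: vadd_def intro!: nth_equalityI)

lemma power_card_pow:
  fixes x :: "'a :: {field,finite}"
  shows "x ^ (card (UNIV :: 'a set) ^ n) = x"
  by (induction n) (simp_all add: power_card_same power_mult)

lemma gen_code_eq:
  assumes "prime p" "length f = \<alpha>" "length g = \<beta>"
  shows "gen_code p i \<alpha> \<beta> f g = range (\<lambda>r. act1 p i r f) \<times> range (\<lambda>r. act2 p i r g)"
  using assms
  by (auto simp: gen_code_def padd_def mod_act_def act1_zero_vec act2_zero_vec
      vadd_zero_right vadd_zero_left)

theorem corollary1:
  fixes f :: "'a::{field,finite} list" and g :: "('a \<times> 'a) list"
    and p m i \<alpha> \<beta> :: nat
  assumes "prime p" and "card (UNIV :: 'a set) = p ^ m"
    and "gcd \<alpha> (Theta_ord TYPE('a) p i) = 1"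
    and "length f = \<alpha>" and "length g = \<beta>"
  shows "\<exists>C1 C2. cyclic_code \<alpha> C1 \<and> skew_cyclic_code_R p i \<beta> C2 \<and>
           gen_code p i \<alpha> \<beta> f g = C1 \<times> C2"
proof -
  have ch: "CHAR('a) = p" using char_eq[OF assms(1) assms(2)] .
  have m0: "m > 0"
  proof (rule ccontr)
    assume "\<not> m > 0"
    hence "card (UNIV :: 'a set) = 1" using assms(2) by simp
    then obtain x where "(UNIV :: 'a set) = {x}" by (rule card_1_singletonE)
    hence "(0::'a) = 1" by (metis UNIV_I singletonD)
    thus False by simp
  qed
  have ex: "\<exists>k. 0 < k \<and> (\<forall>a::'a. (Theta p i ^^ k) a = a)"
  proof (intro exI conjI allI)
    fix a :: 'a
    have "(Theta p i ^^ m) a = a ^ ((p ^ i) ^ m)" by (rule Theta_funpow)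
    also have "(p ^ i) ^ m = card (UNIV :: 'a set) ^ i" using assms(2)
      by (simp add: power_mult[symmetric] mult.commute)
    finally show "(Theta p i ^^ m) a = a" by (simp add: power_card_pow)
  qed (rule m0)
  define T where "T = Theta_ord TYPE('a) p i"
  have T: "0 < T \<and> (\<forall>a::'a. (Theta p i ^^ T) a = a)"
    unfolding T_def Theta_ord_def by (rule LeastI_ex[OF ex])
  hence Tid: "(Theta p i ^^ T) = (id :: 'a \<Rightarrow> 'a)" by auto
  have "coprime T \<alpha>" using assms(3) unfolding T_def by (simp add: coprime_iff_gcd_eq_1 gcd.commute)
  then obtain x where x: "[T * x = Suc 0] (mod \<alpha>)" using cong_solve_coprime_nat by blast
  define s where "s = T * x"
  have idp: "(id :: 'a \<Rightarrow> 'a) ^^ x = id" by (induction x) auto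
  have sid: "(Theta p i ^^ s) = (id :: 'a \<Rightarrow> 'a)"
    unfolding s_def funpow_mult[symmetric] Tid by (rule idp)
  have smod: "s mod length f = 1 mod length f" using x assms(4) by (simp add: s_def cong_def)
  define C1 where "C1 = range (\<lambda>r. act1 p i r f)"
  define C2 where "C2 = range (\<lambda>r. act2 p i r g)"
  have "cyclic_code \<alpha> C1"
    unfolding cyclic_code_def C1_def
  proof (intro conjI ballI allI)
    show "range (\<lambda>r. act1 p i r f) \<subseteq> {xs. length xs = \<alpha>}" using assms(4) by auto
    show "replicate \<alpha> 0 \<in> range (\<lambda>r. act1 p i r f)"
      using act1_nil[of p i f] assms(4) by (metis rangeI)
  next
    fix a b assume "a \<in> range (\<lambda>r. act1 p i r f)" "b \<in> range (\<lambda>r. act1 p i r f)"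
    then obtain r1 r2 where "a = act1 p i r1 f" "b = act1 p i r2 f" by auto
    then show "vadd a b \<in> range (\<lambda>r. act1 p i r f)" using act1_add[of p i r1 f r2] by auto
  next
    fix c :: 'a and a assume "a \<in> range (\<lambda>r. act1 p i r f)"
    then obtain r where "a = act1 p i r f" by auto
    then have "map (\<lambda>b. c * b) a = act1 p i (map (\<lambda>x. (c * fst x, snd x)) r) f"
      using act1_smult[of c p i r f] by simp
    then show "map (\<lambda>b. c * b) a \<in> range (\<lambda>r. act1 p i r f)" by (metis rangeI)
  next
    fix a assume "a \<in> range (\<lambda>r. act1 p i r f)"
    then obtain r where "a = act1 p i r f" by auto
    then show "cshift a \<in> range (\<lambda>r. act1 p i r f)"
      using act1_shift[OF assms(1) sid smod] by auto
  qed
  moreover have "skew_cyclic_code_R p i \<beta> C2"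
    unfolding skew_cyclic_code_R_def C2_def
  proof (intro conjI ballI allI)
    show "range (\<lambda>r. act2 p i r g) \<subseteq> {xs. length xs = \<beta>}" using assms(5) by auto
    show "replicate \<beta> 0 \<in> range (\<lambda>r. act2 p i r g)"
      using act2_nil[of p i g] assms(5) by (metis rangeI)
  next
    fix a b assume "a \<in> range (\<lambda>r. act2 p i r g)" "b \<in> range (\<lambda>r. act2 p i r g)"
    then obtain r1 r2 where "a = act2 p i r1 g" "b = act2 p i r2 g" by auto
    then show "vadd a b \<in> range (\<lambda>r. act2 p i r g)" using act2_add[of p i r1 g r2] by auto
  next
    fix c a assume "a \<in> range (\<lambda>r. act2 p i r g)"
    then obtain r where "a = act2 p i r g" by auto
    then have "map (Rmul c) a = act2 p i (map (Rmul c) r) g"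
      using act2_smult[of c p i r g] by simp
    then show "map (Rmul c) a \<in> range (\<lambda>r. act2 p i r g)" by (metis rangeI)
  next
    fix a assume "a \<in> range (\<lambda>r. act2 p i r g)"
    then obtain r where "a = act2 p i r g" by auto
    then show "map (thetaR p i) (cshift a) \<in> range (\<lambda>r. act2 p i r g)"
      using act2_shift[OF ch assms(1)] by auto
  qed
  moreover have "gen_code p i \<alpha> \<beta> f g = C1 \<times> C2"
    unfolding C1_def C2_def using gen_code_eq[OF assms(1) assms(4) assms(5)] .
  ultimately show ?thesis by blast
qed

end
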